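(* (i) Let $\beta:\mathbb{Z}\to\mathbb{C}$ have convergent increments and let $d:\mathcal{A}\to A$ be the invariant derivation $d(a)=[\beta(\mathbb{K}),a]$. Then there exists an operator $D:\mathcal{D}\to\mathcal{H}$ such that $[D,\pi(a)]f=\pi(d(a))f$ and $U_\varphi DU_\varphi^{-1}f=Df$ for all $f\in\mathcal{D}$, $a\in\mathcal{A}$, $\varphi\in[0,2\pi)$. Moreover, every such $D$ has the form $Df=\beta(\mathbb{K})f-f\alpha(\mathbb{K})$ for some sequence $\alpha:\mathbb{Z}\to\mathbb{C}$. (ii) Let $\beta:\mathbb{Z}\to\mathbb{C}$ have convergent increments and let $d:\mathcal{A}\to A$ be the covariant derivation $d(a)=[U\beta(\mathbb{K}),a]$. Then there exists an operator $D:\mathcal{D}\to\mathcal{H}$ such that $[D,\pi(a)]f=\pi(d(a))f$ and $U_\varphi DU_\varphi^{-1}f=e^{i\varphi}Df$ for all $f\in\mathcal{D}$, $a\in\mathcal{A}$, $\varphi\in[0,2\pi)$. Moreover, every such $D$ has the form $Df=U\beta(\mathbb{K})f-fU\alpha(\mathbb{K})$ for some sequence $\alpha:\mathbb{Z}\to\mathbb{C}$.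
   Context: Let $\{E_k\}$ be the canonical basis of $\ell^2(\mathbb{Z})$, $UE_k=E_{k+1}$, $\mathbb{K}E_k=kE_k$, $a(\mathbb{K})E_k=a(k)E_k$. $A$ is the C$^*$-algebra generated by $U$ and all $a(\mathbb{K})$ with $a$ having finite limits at $\pm\infty$; $\mathcal{A}$ is the algebra of finite sums $\sum_nU^na_n(\mathbb{K})$ with each $a_n$ eventually constant (constant on $k\ge k_0$ and on $k\le-k_0$ for some $k_0$). A function $\beta$ has convergent increments if $k\mapsto\beta(k)-\beta(k-1)$ has finite limits as $k\to\pm\infty$. $\mathcal{H}$ is the Hilbert space of Hilbert–Schmidt operators on $\ell^2(\mathbb{Z})$ with $\langle f,g\rangle=\mathrm{tr}(f^*g)$, each $f$ uniquely $f=\sum_nU^nf_n(\mathbb{K})$ with $\sum_{n,k}|f_n(k)|^2<\infty$. $\mathcal{D}\subset\mathcal{H}$ is the dense subspace of finite sums with each $f_n$ finitely supported. $\pi(a)f=af$, $\pi'(a)f=fa$ for $a\in A$ (both preserve $\mathcal{D}$ for $a\in\mathcal{A}$). $U_\varphi f=\sum_ne^{in\varphi}U^nf_n(\mathbb{K})$ for $\varphi\in[0,2\pi)$. *)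

theory Defs
  imports "HOL-Analysis.Analysis" "HOL-Library.Function_Algebras"
begin

text \<open>Bounded (and Hilbert--Schmidt) operators on l2(Z) are represented by their
matrices w.r.t. the canonical basis: M j k is the coefficient of E_j in M E_k.\<close>

type_synonym mat = "int \<Rightarrow> int \<Rightarrow> complex"

definition mmult :: "mat \<Rightarrow> mat \<Rightarrow> mat" where
  "mmult A B = (\<lambda>j k. \<Sum>\<^sub>\<infinity>m. A j m * B m k)"

definition diagop :: "(int \<Rightarrow> complex) \<Rightarrow> mat" where
  "diagop a = (\<lambda>j k. if j = k then a k else 0)"

definition shiftU :: mat where
  "shiftU = (\<lambda>j k. if j = k + 1 then 1 else 0)"

definition Upow :: "int \<Rightarrow> mat" where
  "Upow n = (\<lambda>j k. if j = k + n then 1 else 0)"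

definition eventually_const :: "(int \<Rightarrow> complex) \<Rightarrow> bool" where
  "eventually_const a \<longleftrightarrow> (\<exists>k0. (\<forall>k\<ge>k0. a k = a k0) \<and> (\<forall>k\<le>-k0. a k = a (-k0)))"

definition calA :: "mat set" where
  "calA = {a. \<exists>N an. finite N \<and> (\<forall>n\<in>N. eventually_const (an n)) \<and>
                 a = (\<Sum>n\<in>N. mmult (Upow n) (diagop (an n)))}"

definition conv_incr :: "(int \<Rightarrow> complex) \<Rightarrow> bool" where
  "conv_incr \<beta> \<longleftrightarrow> (\<exists>L1 L2. ((\<lambda>k. \<beta> k - \<beta> (k - 1)) \<longlongrightarrow> L1) at_top \<and>
                              ((\<lambda>k. \<beta> k - \<beta> (k - 1)) \<longlongrightarrow> L2) at_bot)"

text \<open>Hilbert--Schmidt operators (the space H)\<close>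
definition HS :: "mat set" where
  "HS = {f. (\<lambda>(j,k). (cmod (f j k))\<^sup>2) summable_on (UNIV :: (int \<times> int) set)}"

text \<open>the dense subspace D: finitely supported matrices
  (finite sums sum_n U^n f_n(K) with f_n finitely supported)\<close>
definition calD :: "mat set" where
  "calD = {f. finite {(j,k). f j k \<noteq> 0}}"

text \<open>U_phi f = sum_n e^(i n phi) U^n f_n(K)\<close>
definition Uphi :: "real \<Rightarrow> mat \<Rightarrow> mat" where
  "Uphi \<phi> f = (\<lambda>j k. exp (\<i> * of_real (of_int (j - k) * \<phi>)) * f j k)"

definition op_DH :: "(mat \<Rightarrow> mat) \<Rightarrow> bool" where
  "op_DH D \<longleftrightarrow> (\<forall>f\<in>calD. D f \<in> HS) \<and>
     (\<forall>f\<in>calD. \<forall>g\<in>calD. D (f + g) = D f + D g) \<and>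
     (\<forall>f\<in>calD. \<forall>c. D (\<lambda>j k. c * f j k) = (\<lambda>j k. c * D f j k))"

definition commD :: "(mat \<Rightarrow> mat) \<Rightarrow> mat \<Rightarrow> mat \<Rightarrow> mat" where
  "commD D a f = D (mmult a f) - mmult a (D f)"

definition comm :: "mat \<Rightarrow> mat \<Rightarrow> mat" where
  "comm x y = mmult x y - mmult y x"

end

theory Submission
  imports Defs
begin


lemma infsum_fin:
  fixes f :: "int \<Rightarrow> complex"
  assumes "finite F" "\<And>x. x \<notin> F \<Longrightarrow> f x = 0"
  shows "infsum f UNIV = sum f F"
proof -
  have "infsum f UNIV = infsum f F"
    by (rule infsum_cong_neutral) (use assms in auto)
  also have "\<dots> = sum f F" using assms(1) by simp
  finally show ?thesis .
qed

lemma mmult_diag_left: "mmult (diagop b) X = (\<lambda>j k. b j * X j k)"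
  unfolding mmult_def diagop_def
  by (intro ext, subst infsum_fin[where F="{_}"]) auto

lemma mmult_diag_right: "mmult X (diagop b) = (\<lambda>j k. X j k * b k)"
  unfolding mmult_def diagop_def
  by (intro ext, subst infsum_fin[where F="{_}"]) auto

definition sd :: "(int \<Rightarrow> complex) \<Rightarrow> mat" where
  "sd c = (\<lambda>j m. if j = m + 1 then c m else 0)"

lemma mmult_sd_left: "mmult (sd c) X = (\<lambda>j k. c (j-1) * X (j-1) k)"
  unfolding mmult_def sd_def
  by (intro ext, subst infsum_fin[where F="{_ - 1}"]) auto

lemma mmult_sd_right: "mmult X (sd c) = (\<lambda>j k. X j (k+1) * c k)"
  unfolding mmult_def sd_def
  by (intro ext, subst infsum_fin[where F="{_ + 1}"]) auto

lemma shiftU_sd: "shiftU = sd (\<lambda>_. 1)"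
  unfolding shiftU_def sd_def by auto

lemma V_sd: "mmult shiftU (diagop b) = sd b"
  unfolding mmult_diag_right shiftU_def sd_def by (auto intro!: ext)

lemma mmult_Upow: "mmult (Upow n) X = (\<lambda>j k. X (j-n) k)"
  unfolding mmult_def Upow_def
  by (intro ext, subst infsum_fin[where F="{_ - n}"]) auto

definition E :: "int \<Rightarrow> int \<Rightarrow> mat" where
  "E r q = (\<lambda>j k. if j = r \<and> k = q then 1 else 0)"

lemma mmult_E_right: "mmult X (E r q) = (\<lambda>j k. if k = q then X j r else 0)"
  unfolding mmult_def E_def
  by (intro ext, subst infsum_fin[where F="{r}"]) auto

lemma mmult_fin:
  assumes "finite G" "\<And>m k. m \<notin> G \<Longrightarrow> g m k = 0"
  shows "mmult a g j k = (\<Sum>m\<in>G. a j m * g m k)"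
  unfolding mmult_def by (rule infsum_fin) (use assms in auto)

definition rows :: "mat \<Rightarrow> int set" where
  "rows f = fst ` {(j,k). f j k \<noteq> 0}"

lemma rows_fin: "f \<in> calD \<Longrightarrow> finite (rows f)"
  unfolding rows_def calD_def by auto

lemma rows_out: "m \<notin> rows f \<Longrightarrow> f m k = 0"
  unfolding rows_def by force

lemma mmult_0_left: "mmult 0 X = 0"
  unfolding mmult_def by (auto intro!: ext)

definition P :: "int \<Rightarrow> mat" where
  "P p = diagop (\<lambda>j. if j = p then 1 else 0)"

lemma ev_const_P: "eventually_const (\<lambda>j. if j = p then 1 else 0)"
  unfolding eventually_const_def
  by (rule exI[of _ "\<bar>p\<bar> + 1"]) auto

lemma P_calA: "P p \<in> calA"
  unfolding calA_def
  apply (rule CollectI, rule exI[of _ "{0}"], rule exI[of _ "\<lambda>_ j. if j = p then 1 else 0"])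
  using ev_const_P by (auto simp: mmult_Upow P_def)

lemma shiftU_calA: "shiftU \<in> calA"
  unfolding calA_def
  apply (rule CollectI, rule exI[of _ "{1}"], rule exI[of _ "\<lambda>_ j. 1"])
  by (auto simp: mmult_Upow eventually_const_def shiftU_def diagop_def intro!: ext)

lemma E_calD: "E r q \<in> calD"
proof -
  have "{(j,k). E r q j k \<noteq> 0} = {(r,q)}" unfolding E_def by auto
  thus ?thesis unfolding calD_def by simp
qed

lemma calD_sub: "f \<in> calD \<Longrightarrow> (\<And>j k. g j k \<noteq> 0 \<Longrightarrow> f j k \<noteq> 0) \<Longrightarrow> g \<in> calD"
proof -
  assume a: "f \<in> calD" "\<And>j k. g j k \<noteq> 0 \<Longrightarrow> f j k \<noteq> 0"
  have "{(j,k). g j k \<noteq> 0} \<subseteq> {(j,k). f j k \<noteq> 0}" using a(2) by auto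
  thus ?thesis using a(1) unfolding calD_def by (auto intro: finite_subset)
qed

lemma calD_HS: "f \<in> calD \<Longrightarrow> f \<in> HS"
proof -
  assume a: "f \<in> calD"
  have "{x \<in> UNIV. (\<lambda>(j,k). (cmod (f j k))\<^sup>2) x \<noteq> 0} \<subseteq> {(j,k). f j k \<noteq> 0}" by auto
  hence "finite {x \<in> UNIV. (\<lambda>(j,k). (cmod (f j k))\<^sup>2) x \<noteq> 0}"
    using a unfolding calD_def by (auto intro: finite_subset)
  thus ?thesis unfolding HS_def by (auto intro: finite_nonzero_values_imp_summable_on)
qed

lemma exp_int_eq_1:
  fixes n :: int
  assumes "\<forall>\<phi>\<in>{0..<2*pi}. exp (\<i> * of_real (of_int n * \<phi>)) = 1"
  shows "n = 0"
proof (rule ccontr)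
  assume n: "n \<noteq> 0"
  define \<phi> where "\<phi> = pi / \<bar>of_int n\<bar>"
  have ge: "\<bar>(of_int n::real)\<bar> \<ge> 1" using n by linarith
  have "\<phi> \<ge> 0" unfolding \<phi>_def by simp
  moreover have "\<phi> \<le> pi" unfolding \<phi>_def using ge pi_gt_zero
    by (simp add: divide_le_eq)  
  moreover have "\<phi> < 2*pi" using \<open>\<phi> \<le> pi\<close> pi_gt_zero by linarith
  ultimately have "\<phi> \<in> {0..<2*pi}" by auto
  hence e: "exp (\<i> * of_real (of_int n * \<phi>)) = 1" using assms by blast
  show False
  proof (cases "n > 0")
    case True
    hence "of_int n * \<phi> = pi" unfolding \<phi>_def by simp
    thus False using e by simp
  next
    case False
    hence "of_int n * \<phi> = - pi" using n unfolding \<phi>_def by simp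
    hence "exp (\<i> * of_real (of_int n * \<phi>)) = inverse (exp (\<i> * of_real pi))"
      by (simp add: exp_minus)
    thus False using e by simp
  qed
qed

lemma exp_comb:
  "exp (\<i> * of_real (of_int a * \<phi>)) * exp (\<i> * of_real (of_int b * - \<phi>)) =
   exp (\<i> * of_real (of_int (a - b) * \<phi>))"
  by (simp add: exp_add[symmetric] algebra_simps)



lemma lin_det:
  assumes D: "op_DH D"
    and DE: "\<And>r q. D (E r q) = D0 (E r q)"
    and add0: "\<And>f g. D0 (f + g) = D0 f + D0 g"
    and sc0: "\<And>c f. D0 (\<lambda>j k. c * f j k) = (\<lambda>j k. c * D0 f j k)"
    and f: "f \<in> calD"
  shows "D f = D0 f"
proof -
  have Dadd: "\<And>f g. f\<in>calD \<Longrightarrow> g\<in>calD \<Longrightarrow> D (f+g) = D f + D g"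
    and Dsc: "\<And>f c. f\<in>calD \<Longrightarrow> D (\<lambda>j k. c * f j k) = (\<lambda>j k. c * D f j k)"
    using D unfolding op_DH_def by auto
  have z: "(\<lambda>j k. (0::complex) * h j k) = 0" for h :: mat by (intro ext) simp
  have z0: "(0::mat) \<in> calD" unfolding calD_def by simp
  have D00: "D 0 = 0" using Dsc[OF z0, of 0] z by simp
  have D000: "D0 0 = 0" using sc0[of 0 0] z by simp
  have main: "finite S \<Longrightarrow> \<forall>f\<in>calD. {(j,k). f j k \<noteq> 0} \<subseteq> S \<longrightarrow> D f = D0 f" for S
  proof (induction S rule: finite_induct)
    case empty
    show ?case
    proof (intro ballI impI)
      fix f :: mat assume "{(j,k). f j k \<noteq> 0} \<subseteq> {}"
      hence "f = 0" by (intro ext) auto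
      thus "D f = D0 f" using D00 D000 by simp
    qed
  next
    case (insert s S)
    obtain r q where s: "s = (r,q)" by force
    show ?case
    proof (intro ballI impI)
      fix f :: mat assume fD: "f \<in> calD" and sub: "{(j,k). f j k \<noteq> 0} \<subseteq> insert s S"
      define g where "g = (\<lambda>j k. if j = r \<and> k = q then 0 else f j k)"
      define h where "h = (\<lambda>j k. f r q * E r q j k)"
      have fgh: "f = g + h" unfolding g_def h_def E_def by (intro ext) auto
      have gD: "g \<in> calD" by (rule calD_sub[OF fD]) (auto simp: g_def split: if_splits)
      have gS: "{(j,k). g j k \<noteq> 0} \<subseteq> S" using sub s unfolding g_def by auto
      have hD: "h \<in> calD" unfolding h_def by (rule calD_sub[OF E_calD]) auto
      have "D g = D0 g" using insert.IH gD gS by blast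
      moreover have "D h = D0 h" unfolding h_def using Dsc[OF E_calD] sc0 DE by simp
      ultimately show "D f = D0 f" using fgh Dadd[OF gD hD] add0 by simp
    qed
  qed
  show ?thesis using main[of "{(j,k). f j k \<noteq> 0}"] f unfolding calD_def by auto
qed

lemma uphi_cancel:
  "exp (\<i> * of_real (of_int n * \<phi>)) * (c * (exp (\<i> * of_real (of_int n * - \<phi>)) * y)) = c * y"
proof -
  have e: "exp (\<i> * of_real (of_int n * \<phi>)) * exp (\<i> * of_real (of_int n * - \<phi>)) = 1"
    by (simp add: exp_minus_inverse)
  have "exp (\<i> * of_real (of_int n * \<phi>)) * (c * (exp (\<i> * of_real (of_int n * - \<phi>)) * y))
     = c * y * (exp (\<i> * of_real (of_int n * \<phi>)) * exp (\<i> * of_real (of_int n * - \<phi>)))"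
    by (simp add: algebra_simps)
  thus ?thesis using e by simp
qed

definition D1 :: "(int \<Rightarrow> complex) \<Rightarrow> mat \<Rightarrow> mat" where
  "D1 \<beta> f = (\<lambda>j k. (\<beta> j - \<beta> k) * f j k)"

lemma D1_apply[simp]: "D1 \<beta> f j k = (\<beta> j - \<beta> k) * f j k"
  by (simp add: D1_def)

lemma ex1:
  "op_DH (D1 \<beta>) \<and>
   (\<forall>f\<in>calD. \<forall>a\<in>calA. commD (D1 \<beta>) a f = mmult (comm (diagop \<beta>) a) f) \<and>
   (\<forall>f\<in>calD. \<forall>\<phi>\<in>{0..<2*pi}. Uphi \<phi> (D1 \<beta> (Uphi (-\<phi>) f)) = D1 \<beta> f)"
proof (intro conjI ballI)
  show "op_DH (D1 \<beta>)"
    unfolding op_DH_def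
  proof (intro conjI ballI allI)
    fix f assume f: "f \<in> calD"
    have "D1 \<beta> f \<in> calD" by (rule calD_sub[OF f]) (auto simp: D1_def)
    thus "D1 \<beta> f \<in> HS" by (rule calD_HS)
  qed (auto simp: D1_def algebra_simps intro!: ext)
next
  fix f a assume f: "f \<in> calD"
  define F where "F = rows f"
  have F: "finite F" using f rows_fin F_def by simp
  have fo: "\<And>m k. m \<notin> F \<Longrightarrow> f m k = 0" using rows_out F_def by simp
  have Dfo: "\<And>m k. m \<notin> F \<Longrightarrow> D1 \<beta> f m k = 0" using fo by (simp add: D1_def)
  have af: "\<And>j k. mmult a f j k = (\<Sum>m\<in>F. a j m * f m k)" by (rule mmult_fin[OF F fo])
  have aDf: "\<And>j k. mmult a (D1 \<beta> f) j k = (\<Sum>m\<in>F. a j m * D1 \<beta> f m k)" by (rule mmult_fin[OF F Dfo])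
  have cf: "\<And>j k. mmult (comm (diagop \<beta>) a) f j k = (\<Sum>m\<in>F. comm (diagop \<beta>) a j m * f m k)"
    by (rule mmult_fin[OF F fo])
  have cm: "\<And>j m. comm (diagop \<beta>) a j m = \<beta> j * a j m - a j m * \<beta> m"
    by (simp add: comm_def mmult_diag_left mmult_diag_right)
  show "commD (D1 \<beta>) a f = mmult (comm (diagop \<beta>) a) f"
  proof (intro ext)
    fix j k
    have "commD (D1 \<beta>) a f j k = (\<beta> j - \<beta> k) * (\<Sum>m\<in>F. a j m * f m k) - (\<Sum>m\<in>F. a j m * ((\<beta> m - \<beta> k) * f m k))"
      by (simp add: commD_def af aDf)
    also have "\<dots> = (\<Sum>m\<in>F. (\<beta> j * a j m - a j m * \<beta> m) * f m k)"
      by (simp add: sum_distrib_left sum_subtractf[symmetric] algebra_simps)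
    finally show "commD (D1 \<beta>) a f j k = mmult (comm (diagop \<beta>) a) f j k"
      by (simp add: cf cm)
  qed
next
  fix f \<phi> assume "f \<in> calD"
  show "Uphi \<phi> (D1 \<beta> (Uphi (-\<phi>) f)) = D1 \<beta> f"
    by (intro ext) (simp only: Uphi_def D1_apply uphi_cancel)
qed

lemma uniq1:
  assumes D: "op_DH D"
    and cD: "\<forall>f\<in>calD. \<forall>a\<in>calA. commD D a f = mmult (comm (diagop \<beta>) a) f"
    and iD: "\<forall>f\<in>calD. \<forall>\<phi>\<in>{0..<2*pi}. Uphi \<phi> (D (Uphi (-\<phi>) f)) = D f"
  shows "\<exists>\<alpha>. \<forall>f\<in>calD. D f = mmult (diagop \<beta>) f - mmult f (diagop \<alpha>)"
proof -
  have Dsc: "\<And>f c. f\<in>calD \<Longrightarrow> D (\<lambda>j k. c * f j k) = (\<lambda>j k. c * D f j k)"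
    using D unfolding op_DH_def by auto
  have z: "(\<lambda>j k. (0::complex) * h j k) = 0" for h :: mat by (intro ext) simp
  have z0: "(0::mat) \<in> calD" unfolding calD_def by simp
  have D00: "D 0 = 0" using Dsc[OF z0, of 0] z by simp
  define c where "c r q = D (E r q) r q" for r q
  have rowz: "D (E r q) j k = 0" if "j \<noteq> r" for r q j k
  proof -
    have "commD D (P j) (E r q) = mmult (comm (diagop \<beta>) (P j)) (E r q)"
      using cD E_calD P_calA by blast
    moreover have "mmult (P j) (E r q) = 0" using that
      by (intro ext) (simp add: P_def mmult_diag_left E_def)
    moreover have "comm (diagop \<beta>) (P j) = 0"
      unfolding P_def comm_def mmult_diag_left mmult_diag_right by (intro ext) (simp add: diagop_def)
    ultimately have "D 0 - mmult (P j) (D (E r q)) = 0"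
      by (simp add: commD_def mmult_0_left)
    hence "mmult (P j) (D (E r q)) j k = 0" using D00 by simp
    thus ?thesis by (simp add: P_def mmult_diag_left)
  qed
  have diagz: "D (E r q) j k = 0" if "j - k \<noteq> r - q" for r q j k
  proof (rule ccontr)
    assume nz: "D (E r q) j k \<noteq> 0"
    have "\<forall>\<phi>\<in>{0..<2*pi}. exp (\<i> * of_real (of_int ((j - k) - (r - q)) * \<phi>)) = 1"
    proof
      fix \<phi> :: real assume "\<phi> \<in> {0..<2*pi}"
      hence eq: "Uphi \<phi> (D (Uphi (-\<phi>) (E r q))) = D (E r q)" using iD E_calD by blast
      have "Uphi (-\<phi>) (E r q) = (\<lambda>j k. exp (\<i> * of_real (of_int (r - q) * - \<phi>)) * E r q j k)"
        by (intro ext) (simp add: Uphi_def E_def)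
      hence DU: "D (Uphi (-\<phi>) (E r q)) = (\<lambda>j k. exp (\<i> * of_real (of_int (r - q) * - \<phi>)) * D (E r q) j k)"
        using Dsc[OF E_calD] by simp
      have e2: "Uphi \<phi> (D (Uphi (-\<phi>) (E r q))) j k = D (E r q) j k"
        using fun_cong[OF fun_cong[OF eq, of j], of k] .
      from e2[unfolded DU] have "exp (\<i> * of_real (of_int (j - k) * \<phi>)) * (exp (\<i> * of_real (of_int (r - q) * - \<phi>)) * D (E r q) j k) = D (E r q) j k"
        by (simp only: Uphi_def)
      hence "(exp (\<i> * of_real (of_int (j - k) * \<phi>)) * exp (\<i> * of_real (of_int (r - q) * - \<phi>))) * D (E r q) j k = 1 * D (E r q) j k"
        by (simp add: mult.assoc)
      hence "exp (\<i> * of_real (of_int (j - k) * \<phi>)) * exp (\<i> * of_real (of_int (r - q) * - \<phi>)) = 1"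
        using nz by (metis mult_cancel_right)
      thus "exp (\<i> * of_real (of_int ((j - k) - (r - q)) * \<phi>)) = 1" by (simp only: exp_comb[symmetric])
    qed
    hence "(j - k) - (r - q) = 0" by (rule exp_int_eq_1)
    thus False using that by simp
  qed
  have DE: "D (E r q) j k = (if j = r \<and> k = q then c r q else 0)" for r q j k
    using rowz diagz c_def by (cases "j = r"; cases "k = q") auto
  have step: "c (r+1) q - c r q = \<beta> (r+1) - \<beta> r" for r q
  proof -
    have "commD D shiftU (E r q) = mmult (comm (diagop \<beta>) shiftU) (E r q)"
      using cD E_calD shiftU_calA by blast
    moreover have "mmult shiftU (E r q) = E (r+1) q"
      by (intro ext) (simp add: shiftU_sd mmult_sd_left E_def)
    ultimately have "(D (E (r+1) q) - mmult shiftU (D (E r q))) (r+1) q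
        = mmult (comm (diagop \<beta>) shiftU) (E r q) (r+1) q"
      by (simp add: commD_def)
    thus ?thesis
      by (simp add: mmult_E_right comm_def mmult_diag_left mmult_diag_right shiftU_sd mmult_sd_left c_def)
         (simp add: sd_def)
  qed
  define \<alpha> where "\<alpha> q = \<beta> 0 - c 0 q" for q
  have cform: "c r q = \<beta> r - \<alpha> q" for r q
  proof (induction r rule: int_induct[where k=0])
    case base thus ?case by (simp add: \<alpha>_def)
  next
    case (step1 i) thus ?case using step[of i q] by algebra
  next
    case (step2 i)
    have "c i q - c (i-1) q = \<beta> i - \<beta> (i-1)" using step[of "i - 1" q] by simp
    thus ?case using step2 by algebra
  qed
  show ?thesis
  proof (intro exI ballI)
    fix f assume f: "f \<in> calD"
    have DE2: "D (E r q) = (\<lambda>f j k. \<beta> j * f j k - f j k * \<alpha> k) (E r q)" for r q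
    proof (intro ext)
      fix j k show "D (E r q) j k = (\<lambda>f j k. \<beta> j * f j k - f j k * \<alpha> k) (E r q) j k"
        unfolding DE by (simp add: E_def cform)
    qed
    have "D f = (\<lambda>f j k. \<beta> j * f j k - f j k * \<alpha> k) f"
      by (rule lin_det[OF D DE2 _ _ f]) (auto simp: algebra_simps intro!: ext)
    thus "D f = mmult (diagop \<beta>) f - mmult f (diagop \<alpha>)"
      by (simp add: mmult_diag_left mmult_diag_right fun_diff_def)
  qed
qed



definition D2 :: "(int \<Rightarrow> complex) \<Rightarrow> mat \<Rightarrow> mat" where
  "D2 \<beta> f = (\<lambda>j k. \<beta> (j-1) * f (j-1) k - f j (k+1) * \<beta> k)"

lemma D2_apply[simp]: "D2 \<beta> f j k = \<beta> (j-1) * f (j-1) k - f j (k+1) * \<beta> k"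
  by (simp add: D2_def)

lemma uphi2:
  "exp (\<i> * of_real (of_int (j - k) * \<phi>)) *
     (b1 * (exp (\<i> * of_real (of_int (j - 1 - k) * - \<phi>)) * y1) -
      exp (\<i> * of_real (of_int (j - (k + 1)) * - \<phi>)) * y2 * b2)
   = exp (\<i> * of_real \<phi>) * (b1 * y1 - y2 * b2)"
proof -
  have e1: "exp (\<i> * of_real (of_int (j - k) * \<phi>)) * exp (\<i> * of_real (of_int (j - 1 - k) * - \<phi>)) = exp (\<i> * of_real \<phi>)"
    by (simp only: exp_comb) simp
  have e2: "exp (\<i> * of_real (of_int (j - k) * \<phi>)) * exp (\<i> * of_real (of_int (j - (k + 1)) * - \<phi>)) = exp (\<i> * of_real \<phi>)"
    by (simp only: exp_comb) simp
  have "exp (\<i> * of_real (of_int (j - k) * \<phi>)) *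
     (b1 * (exp (\<i> * of_real (of_int (j - 1 - k) * - \<phi>)) * y1) -
      exp (\<i> * of_real (of_int (j - (k + 1)) * - \<phi>)) * y2 * b2)
   = b1 * y1 * (exp (\<i> * of_real (of_int (j - k) * \<phi>)) * exp (\<i> * of_real (of_int (j - 1 - k) * - \<phi>)))
     - y2 * b2 * (exp (\<i> * of_real (of_int (j - k) * \<phi>)) * exp (\<i> * of_real (of_int (j - (k + 1)) * - \<phi>)))"
    by (simp only: algebra_simps)
  also have "\<dots> = exp (\<i> * of_real \<phi>) * (b1 * y1 - y2 * b2)"
    unfolding e1 e2 by (simp add: algebra_simps)
  finally show ?thesis .
qed

lemma ex2:
  "op_DH (D2 \<beta>) \<and>
   (\<forall>f\<in>calD. \<forall>a\<in>calA. commD (D2 \<beta>) a f = mmult (comm (sd \<beta>) a) f) \<and>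
   (\<forall>f\<in>calD. \<forall>\<phi>\<in>{0..<2*pi}. Uphi \<phi> (D2 \<beta> (Uphi (-\<phi>) f)) = (\<lambda>j k. exp (\<i> * of_real \<phi>) * D2 \<beta> f j k))"
proof (intro conjI ballI)
  show "op_DH (D2 \<beta>)"
    unfolding op_DH_def
  proof (intro conjI ballI allI)
    fix f assume f: "f \<in> calD"
    define S where "S = {(j,k). f j k \<noteq> 0}"
    have "{(j,k). D2 \<beta> f j k \<noteq> 0} \<subseteq> (\<lambda>(j,k). (j+1,k)) ` S \<union> (\<lambda>(j,k). (j,k-1)) ` S"
    proof
      fix x assume x: "x \<in> {(j,k). D2 \<beta> f j k \<noteq> 0}"
      obtain j k where xjk: "x = (j,k)" by force
      have "f (j-1) k \<noteq> 0 \<or> f j (k+1) \<noteq> 0" using x xjk by auto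
      thus "x \<in> (\<lambda>(j,k). (j+1,k)) ` S \<union> (\<lambda>(j,k). (j,k-1)) ` S"
      proof
        assume "f (j-1) k \<noteq> 0"
        hence "(j-1,k) \<in> S" by (simp add: S_def)
        thus ?thesis unfolding xjk by (auto intro!: image_eqI[of _ _ "(j-1,k)"])
      next
        assume "f j (k+1) \<noteq> 0"
        hence "(j,k+1) \<in> S" by (simp add: S_def)
        thus ?thesis unfolding xjk by (auto intro!: image_eqI[of _ _ "(j,k+1)"])
      qed
    qed
    moreover have "finite S" using f by (simp add: S_def calD_def)
    ultimately have "D2 \<beta> f \<in> calD" unfolding calD_def by (auto intro: finite_subset)
    thus "D2 \<beta> f \<in> HS" by (rule calD_HS)
  qed (auto simp: algebra_simps intro!: ext)
next
  fix f a assume f: "f \<in> calD"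
  define F where "F = rows f"
  define G where "G = F \<union> (\<lambda>m. m+1) ` F"
  have F: "finite F" using f rows_fin F_def by simp
  have G: "finite G" using F G_def by simp
  have fo: "\<And>m k. m \<notin> F \<Longrightarrow> f m k = 0" using rows_out F_def by simp
  have fG: "\<And>m k. m \<notin> G \<Longrightarrow> f m k = 0" using fo G_def by simp
  have fG1: "\<And>m k. m \<notin> G \<Longrightarrow> f (m-1) k = 0"
  proof -
    fix m k assume "m \<notin> G"
    hence "m - 1 \<notin> F" unfolding G_def by (auto intro: image_eqI[of _ _ "m-1"])
    thus "f (m-1) k = 0" by (rule fo)
  qed
  have Dfo: "\<And>m k. m \<notin> G \<Longrightarrow> D2 \<beta> f m k = 0" using fG fG1 by simp
  have af: "\<And>j k. mmult a f j k = (\<Sum>m\<in>G. a j m * f m k)" by (rule mmult_fin[OF G fG])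
  have aDf: "\<And>j k. mmult a (D2 \<beta> f) j k = (\<Sum>m\<in>G. a j m * D2 \<beta> f m k)" by (rule mmult_fin[OF G Dfo])
  have cf: "\<And>j k. mmult (comm (sd \<beta>) a) f j k = (\<Sum>m\<in>G. comm (sd \<beta>) a j m * f m k)"
    by (rule mmult_fin[OF G fG])
  have cm: "\<And>j m. comm (sd \<beta>) a j m = \<beta> (j-1) * a (j-1) m - a j (m+1) * \<beta> m"
    by (simp add: comm_def mmult_sd_left mmult_sd_right)
  have key: "(\<Sum>m\<in>G. a j (m+1) * \<beta> m * f m k) = (\<Sum>m\<in>G. a j m * (\<beta> (m-1) * f (m-1) k))" for j k
  proof -
    have "(\<Sum>m\<in>G. a j (m+1) * \<beta> m * f m k) = infsum (\<lambda>m. a j (m+1) * \<beta> m * f m k) UNIV"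
      by (rule infsum_fin[OF G, symmetric]) (simp add: fG)
    also have "\<dots> = infsum (\<lambda>m. a j m * (\<beta> (m-1) * f (m-1) k)) UNIV"
      by (rule infsum_reindex_bij_witness[where i="\<lambda>m. m - 1" and j="\<lambda>m. m + 1"]) auto
    also have "\<dots> = (\<Sum>m\<in>G. a j m * (\<beta> (m-1) * f (m-1) k))"
      by (rule infsum_fin[OF G]) (simp add: fG1)
    finally show ?thesis .
  qed
  show "commD (D2 \<beta>) a f = mmult (comm (sd \<beta>) a) f"
  proof (intro ext)
    fix j k
    have "commD (D2 \<beta>) a f j k =
      \<beta> (j-1) * (\<Sum>m\<in>G. a (j-1) m * f m k) - (\<Sum>m\<in>G. a j m * f m (k+1)) * \<beta> k
      - (\<Sum>m\<in>G. a j m * (\<beta> (m-1) * f (m-1) k - f m (k+1) * \<beta> k))"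
      by (simp add: commD_def af aDf)
    also have "\<dots> = \<beta> (j-1) * (\<Sum>m\<in>G. a (j-1) m * f m k) - (\<Sum>m\<in>G. a j m * (\<beta> (m-1) * f (m-1) k))"
      by (simp add: sum_distrib_left sum_distrib_right sum_subtractf algebra_simps)
    also have "\<dots> = \<beta> (j-1) * (\<Sum>m\<in>G. a (j-1) m * f m k) - (\<Sum>m\<in>G. a j (m+1) * \<beta> m * f m k)"
      by (simp add: key)
    also have "\<dots> = (\<Sum>m\<in>G. (\<beta> (j-1) * a (j-1) m - a j (m+1) * \<beta> m) * f m k)"
      by (simp add: sum_distrib_left sum_subtractf algebra_simps)
    finally show "commD (D2 \<beta>) a f j k = mmult (comm (sd \<beta>) a) f j k"
      by (simp add: cf cm)
  qed
next
  fix f \<phi> assume "f \<in> calD"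
  show "Uphi \<phi> (D2 \<beta> (Uphi (-\<phi>) f)) = (\<lambda>j k. exp (\<i> * of_real \<phi>) * D2 \<beta> f j k)"
    by (intro ext) (simp only: Uphi_def D2_apply uphi2)
qed



lemma exp_shift1:
  assumes "exp (\<i> * of_real (of_int n * \<phi>)) = exp (\<i> * of_real \<phi>)"
  shows "exp (\<i> * of_real (of_int (n - 1) * \<phi>)) = 1"
proof -
  have "exp (\<i> * of_real (of_int (n - 1) * \<phi>)) = exp (\<i> * of_real (of_int n * \<phi>)) * exp (\<i> * of_real (of_int 1 * - \<phi>))"
    by (simp only: exp_comb)
  also have "\<dots> = exp (\<i> * of_real \<phi>) * exp (- (\<i> * of_real \<phi>))" using assms by simp
  also have "\<dots> = 1" by (simp add: exp_minus_inverse)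
  finally show ?thesis .
qed

lemma uniq2:
  assumes D: "op_DH D"
    and cD: "\<forall>f\<in>calD. \<forall>a\<in>calA. commD D a f = mmult (comm (sd \<beta>) a) f"
    and iD: "\<forall>f\<in>calD. \<forall>\<phi>\<in>{0..<2*pi}. Uphi \<phi> (D (Uphi (-\<phi>) f)) = (\<lambda>j k. exp (\<i> * of_real \<phi>) * D f j k)"
  shows "\<exists>\<alpha>. \<forall>f\<in>calD. D f = mmult (sd \<beta>) f - mmult f (sd \<alpha>)"
proof -
  have Dsc: "\<And>f c. f\<in>calD \<Longrightarrow> D (\<lambda>j k. c * f j k) = (\<lambda>j k. c * D f j k)"
    using D unfolding op_DH_def by auto
  have z: "(\<lambda>j k. (0::complex) * h j k) = 0" for h :: mat by (intro ext) simp
  have z0: "(0::mat) \<in> calD" unfolding calD_def by simp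
  have D00: "D 0 = 0" using Dsc[OF z0, of 0] z by simp
  define c where "c r q = D (E r q) (r+1) q" for r q
  define y where "y r q = D (E r q) r (q-1)" for r q
  have PE0: "mmult (P j) (E r q) = 0" if "j \<noteq> r" for j r q using that
    by (intro ext) (simp add: P_def mmult_diag_left E_def)
  have rowz: "D (E r q) j k = 0" if "j \<noteq> r" "j \<noteq> r + 1" for r q j k
  proof -
    have "commD D (P j) (E r q) = mmult (comm (sd \<beta>) (P j)) (E r q)"
      using cD E_calD P_calA by blast
    hence "(D (mmult (P j) (E r q)) - mmult (P j) (D (E r q))) j k = mmult (comm (sd \<beta>) (P j)) (E r q) j k"
      by (simp add: commD_def)
    moreover have "mmult (comm (sd \<beta>) (P j)) (E r q) j k = 0"
      unfolding mmult_E_right comm_def P_def mmult_diag_left mmult_diag_right mmult_sd_left mmult_sd_right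
      using that by (simp add: diagop_def sd_def)
    ultimately have "mmult (P j) (D (E r q)) j k = 0" using D00 PE0[OF that(1)] by simp
    thus ?thesis by (simp add: P_def mmult_diag_left)
  qed
  have diagz: "D (E r q) j k = 0" if "j - k \<noteq> r - q + 1" for r q j k
  proof (rule ccontr)
    assume nz: "D (E r q) j k \<noteq> 0"
    have "\<forall>\<phi>\<in>{0..<2*pi}. exp (\<i> * of_real (of_int ((j - k) - (r - q) - 1) * \<phi>)) = 1"
    proof
      fix \<phi> :: real assume "\<phi> \<in> {0..<2*pi}"
      hence eq: "Uphi \<phi> (D (Uphi (-\<phi>) (E r q))) = (\<lambda>j k. exp (\<i> * of_real \<phi>) * D (E r q) j k)" using iD E_calD by blast
      have "Uphi (-\<phi>) (E r q) = (\<lambda>j k. exp (\<i> * of_real (of_int (r - q) * - \<phi>)) * E r q j k)"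
        by (intro ext) (simp add: Uphi_def E_def)
      hence DU: "D (Uphi (-\<phi>) (E r q)) = (\<lambda>j k. exp (\<i> * of_real (of_int (r - q) * - \<phi>)) * D (E r q) j k)"
        using Dsc[OF E_calD] by simp
      have e2: "Uphi \<phi> (D (Uphi (-\<phi>) (E r q))) j k = exp (\<i> * of_real \<phi>) * D (E r q) j k"
        using fun_cong[OF fun_cong[OF eq, of j], of k] .
      from e2[unfolded DU] have "exp (\<i> * of_real (of_int (j - k) * \<phi>)) * (exp (\<i> * of_real (of_int (r - q) * - \<phi>)) * D (E r q) j k) = exp (\<i> * of_real \<phi>) * D (E r q) j k"
        by (simp only: Uphi_def)
      hence "(exp (\<i> * of_real (of_int (j - k) * \<phi>)) * exp (\<i> * of_real (of_int (r - q) * - \<phi>))) * D (E r q) j k = exp (\<i> * of_real \<phi>) * D (E r q) j k"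
        by (simp add: mult.assoc)
      hence "exp (\<i> * of_real (of_int (j - k) * \<phi>)) * exp (\<i> * of_real (of_int (r - q) * - \<phi>)) = exp (\<i> * of_real \<phi>)"
        using nz by (metis mult_cancel_right)
      hence "exp (\<i> * of_real (of_int ((j - k) - (r - q)) * \<phi>)) = exp (\<i> * of_real \<phi>)" by (simp only: exp_comb)
      thus "exp (\<i> * of_real (of_int ((j - k) - (r - q) - 1) * \<phi>)) = 1" by (rule exp_shift1)
    qed
    hence "(j - k) - (r - q) - 1 = 0" by (rule exp_int_eq_1)
    thus False using that by simp
  qed
  have DE: "D (E r q) j k = (if j = r + 1 \<and> k = q then c r q else if j = r \<and> k = q - 1 then y r q else 0)" for r q j k
  proof (cases "j = r")
    case True thus ?thesis using diagz[of j k r q] y_def by (cases "k = q - 1") auto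
  next
    case False
    show ?thesis
    proof (cases "j = r + 1")
      case True thus ?thesis using diagz[of j k r q] c_def by (cases "k = q") auto
    next
      case F2: False thus ?thesis using rowz False by simp
    qed
  qed
  have cval: "c r q = \<beta> r" for r q
  proof -
    have "commD D (P (r+1)) (E r q) = mmult (comm (sd \<beta>) (P (r+1))) (E r q)"
      using cD E_calD P_calA by blast
    hence "(D (mmult (P (r+1)) (E r q)) - mmult (P (r+1)) (D (E r q))) (r+1) q = mmult (comm (sd \<beta>) (P (r+1))) (E r q) (r+1) q"
      by (simp add: commD_def)
    moreover have "mmult (comm (sd \<beta>) (P (r+1))) (E r q) (r+1) q = - \<beta> r"
      unfolding mmult_E_right comm_def P_def mmult_diag_left mmult_diag_right mmult_sd_left mmult_sd_right
      by (simp add: diagop_def sd_def)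
    moreover have "mmult (P (r+1)) (D (E r q)) (r+1) q = c r q"
      by (simp add: P_def mmult_diag_left c_def)
    ultimately show ?thesis using D00 PE0[of "r+1" r q] by simp
  qed
  have ystep: "y (r+1) q = y r q" for r q
  proof -
    have "commD D shiftU (E r q) = mmult (comm (sd \<beta>) shiftU) (E r q)"
      using cD E_calD shiftU_calA by blast
    moreover have "mmult shiftU (E r q) = E (r+1) q"
      by (intro ext) (simp add: shiftU_sd mmult_sd_left E_def)
    ultimately have "(D (E (r+1) q) - mmult shiftU (D (E r q))) (r+1) (q-1)
        = mmult (comm (sd \<beta>) shiftU) (E r q) (r+1) (q-1)"
      by (simp add: commD_def)
    thus ?thesis
      by (simp add: mmult_E_right shiftU_sd mmult_sd_left y_def)
  qed
  define \<alpha> where "\<alpha> k = - y 0 (k+1)" for k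
  have yform: "y r q = - \<alpha> (q - 1)" for r q
  proof (induction r rule: int_induct[where k=0])
    case base thus ?case by (simp add: \<alpha>_def)
  next
    case (step1 i) thus ?case using ystep[of i q] by simp
  next
    case (step2 i) thus ?case using ystep[of "i - 1" q] by simp
  qed
  let ?D0 = "\<lambda>f j k. \<beta> (j-1) * f (j-1) k - f j (k+1) * \<alpha> k"
  show ?thesis
  proof (intro exI ballI)
    fix f assume f: "f \<in> calD"
    have DE2: "D (E r q) = ?D0 (E r q)" for r q
    proof (intro ext)
      fix j k show "D (E r q) j k = ?D0 (E r q) j k"
        unfolding DE by (auto simp: E_def cval yform)
    qed
    have "D f = ?D0 f"
      by (rule lin_det[OF D DE2 _ _ f]) (auto simp: algebra_simps intro!: ext)
    thus "D f = mmult (sd \<beta>) f - mmult f (sd \<alpha>)"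
      by (simp add: mmult_sd_left mmult_sd_right fun_diff_def)
  qed
qed


theorem mainTheorem16:
  shows
   "(\<forall>\<beta>. conv_incr \<beta> \<longrightarrow>
      (let d = (\<lambda>a. comm (diagop \<beta>) a);
           good = (\<lambda>D. op_DH D \<and>
              (\<forall>f\<in>calD. \<forall>a\<in>calA. commD D a f = mmult (d a) f) \<and>
              (\<forall>f\<in>calD. \<forall>\<phi>\<in>{0..<2*pi}. Uphi \<phi> (D (Uphi (-\<phi>) f)) = D f))
       in (\<exists>D. good D) \<and>
          (\<forall>D. good D \<longrightarrow> (\<exists>\<alpha>. \<forall>f\<in>calD.
              D f = mmult (diagop \<beta>) f - mmult f (diagop \<alpha>)))))
    \<and>
    (\<forall>\<beta>. conv_incr \<beta> \<longrightarrow>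
      (let d = (\<lambda>a. comm (mmult shiftU (diagop \<beta>)) a);
           good = (\<lambda>D. op_DH D \<and>
              (\<forall>f\<in>calD. \<forall>a\<in>calA. commD D a f = mmult (d a) f) \<and>
              (\<forall>f\<in>calD. \<forall>\<phi>\<in>{0..<2*pi}.
                  Uphi \<phi> (D (Uphi (-\<phi>) f)) = (\<lambda>j k. exp (\<i> * of_real \<phi>) * D f j k)))
       in (\<exists>D. good D) \<and>
          (\<forall>D. good D \<longrightarrow> (\<exists>\<alpha>. \<forall>f\<in>calD.
              D f = mmult (mmult shiftU (diagop \<beta>)) f - mmult f (mmult shiftU (diagop \<alpha>))))))"
  proof (intro conjI allI impI)
  fix \<beta> :: "int \<Rightarrow> complex"
  show "let d = (\<lambda>a. comm (diagop \<beta>) a);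
           good = (\<lambda>D. op_DH D \<and>
              (\<forall>f\<in>calD. \<forall>a\<in>calA. commD D a f = mmult (d a) f) \<and>
              (\<forall>f\<in>calD. \<forall>\<phi>\<in>{0..<2*pi}. Uphi \<phi> (D (Uphi (-\<phi>) f)) = D f))
       in (\<exists>D. good D) \<and>
          (\<forall>D. good D \<longrightarrow> (\<exists>\<alpha>. \<forall>f\<in>calD.
              D f = mmult (diagop \<beta>) f - mmult f (diagop \<alpha>)))"
    unfolding Let_def using ex1[of \<beta>] uniq1[of _ \<beta>] by blast
next
  fix \<beta> :: "int \<Rightarrow> complex"
  show "let d = (\<lambda>a. comm (mmult shiftU (diagop \<beta>)) a);
           good = (\<lambda>D. op_DH D \<and>
              (\<forall>f\<in>calD. \<forall>a\<in>calA. commD D a f = mmult (d a) f) \<and>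
              (\<forall>f\<in>calD. \<forall>\<phi>\<in>{0..<2*pi}.
                  Uphi \<phi> (D (Uphi (-\<phi>) f)) = (\<lambda>j k. exp (\<i> * of_real \<phi>) * D f j k)))
       in (\<exists>D. good D) \<and>
          (\<forall>D. good D \<longrightarrow> (\<exists>\<alpha>. \<forall>f\<in>calD.
              D f = mmult (mmult shiftU (diagop \<beta>)) f - mmult f (mmult shiftU (diagop \<alpha>))))"
    unfolding Let_def V_sd using ex2[of \<beta>] uniq2[of _ \<beta>] by blast
qed

end
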